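(* There exist $a_1\ge1$ and $b_1\in(0,1)$, depending only on $\alpha$, such that for every $a>a_1$ and every $b\in(0,b_1)$ the following holds: if $p,q\in\mathbb H$ satisfy $p\notin B(q,r_q)$ and $q\notin B(p,r_p)$, then at most one of $p,q$ belongs to $\mathcal T(a,b)$.
   Context: $\mathbb H=\mathbb R^3$, $p=(x_p,y_p,z_p)$, $\rho_p=\sqrt{x_p^2+y_p^2}$, group law $(x,y,z)\cdot(x',y',z')=(x+x',y+y',z+z'+\tfrac12(xy'-yx'))$, dilations $\delta_\lambda(x,y,z)=(\lambda x,\lambda y,\lambda^2z)$. Fix $\alpha>0$ such that $d_\alpha(p,q)=\inf\{r>0:\delta_{1/r}(p^{-1}\cdot q)\in B_\alpha\}$ is a distance, $B_\alpha$ the closed Euclidean ball of radius $\alpha$ at $0$. $B(p,r)=\{q:d_\alpha(q,p)\le r\}$, $r_p=d_\alpha(0,p)$. $\mathcal T(a,b)=\{p: z_p<-a,\ \rho_p<b\}$. *)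

theory Defs
  imports "HOL-Analysis.Analysis"
begin

type_synonym heis = "real \<times> real \<times> real"

definition hmult :: "heis \<Rightarrow> heis \<Rightarrow> heis" where
  "hmult p q = (case p of (x, y, z) \<Rightarrow> case q of (x', y', z') \<Rightarrow>
     (x + x', y + y', z + z' + (x * y' - y * x') / 2))"

definition hinv :: "heis \<Rightarrow> heis" where
  "hinv p = (case p of (x, y, z) \<Rightarrow> (-x, -y, -z))"

definition hdil :: "real \<Rightarrow> heis \<Rightarrow> heis" where
  "hdil l p = (case p of (x, y, z) \<Rightarrow> (l * x, l * y, l ^ 2 * z))"

definition eucl_norm3 :: "heis \<Rightarrow> real" where
  "eucl_norm3 p = (case p of (x, y, z) \<Rightarrow> sqrt (x^2 + y^2 + z^2))"

definition B_alpha :: "real \<Rightarrow> heis set" where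
  "B_alpha \<alpha> = {p. eucl_norm3 p \<le> \<alpha>}"

definition d_alpha :: "real \<Rightarrow> heis \<Rightarrow> heis \<Rightarrow> real" where
  "d_alpha \<alpha> p q = Inf {r. r > 0 \<and> hdil (1 / r) (hmult (hinv p) q) \<in> B_alpha \<alpha>}"

definition is_distance :: "(heis \<Rightarrow> heis \<Rightarrow> real) \<Rightarrow> bool" where
  "is_distance d \<longleftrightarrow>
     (\<forall>p q. 0 \<le> d p q) \<and> (\<forall>p q. d p q = 0 \<longleftrightarrow> p = q) \<and>
     (\<forall>p q. d p q = d q p) \<and> (\<forall>p q s. d p s \<le> d p q + d q s)"

definition hball :: "real \<Rightarrow> heis \<Rightarrow> real \<Rightarrow> heis set" where
  "hball \<alpha> p r = {q. d_alpha \<alpha> q p \<le> r}"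

definition r_pt :: "real \<Rightarrow> heis \<Rightarrow> real" where
  "r_pt \<alpha> p = d_alpha \<alpha> (0, 0, 0) p"

definition rho :: "heis \<Rightarrow> real" where
  "rho p = (case p of (x, y, z) \<Rightarrow> sqrt (x^2 + y^2))"

definition zc :: "heis \<Rightarrow> real" where
  "zc p = (case p of (x, y, z) \<Rightarrow> z)"

definition Tset :: "real \<Rightarrow> real \<Rightarrow> heis set" where
  "Tset a b = {p. zc p < -a \<and> rho p < b}"

end

theory Submission
  imports Defs
begin

definition gf :: "real \<Rightarrow> real \<Rightarrow> real \<Rightarrow> real" where
  "gf A Z r = A / r^2 + Z / r^4"

lemma mem_iff:
  assumes "r > 0" "\<alpha> > 0"
  shows "hdil (1/r) (x,y,z) \<in> B_alpha \<alpha> \<longleftrightarrow> gf (x^2+y^2) (z^2) r \<le> \<alpha>^2"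
proof -
  have "hdil (1/r) (x,y,z) \<in> B_alpha \<alpha> \<longleftrightarrow> sqrt ((x/r)^2 + (y/r)^2 + ((1/r)^2*z)^2) \<le> \<alpha>"
    by (simp add: hdil_def B_alpha_def eucl_norm3_def)
  also have "\<dots> \<longleftrightarrow> (x/r)^2 + (y/r)^2 + ((1/r)^2*z)^2 \<le> \<alpha>^2"
    using assms by (metis real_le_rsqrt real_sqrt_le_iff real_sqrt_pow2_iff sqrt_le_D
        abs_of_pos less_imp_le real_sqrt_abs sum_power2_ge_zero add_nonneg_nonneg zero_le_power2)
  also have "(x/r)^2 + (y/r)^2 + ((1/r)^2*z)^2 = gf (x^2+y^2) (z^2) r"
    by (simp add: gf_def power_divide power_mult_distrib add_divide_distrib)
  finally show ?thesis .
qed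

lemma gf_mono:
  assumes "0 < r" "r \<le> s" "A \<ge> 0" "Z \<ge> 0"
  shows "gf A Z s \<le> gf A Z r"
proof -
  have "r^2 \<le> s^2" "r^4 \<le> s^4" using assms by (auto intro: power_mono)
  then have "A / s^2 \<le> A / r^2" "Z / s^4 \<le> Z/r^4" using assms
    by (auto intro!: divide_left_mono mult_pos_pos)
  thus ?thesis by (simp add: gf_def)
qed

lemma N_le:
  assumes "r > 0" "\<alpha> > 0" "gf (x^2+y^2) (z^2) r \<le> \<alpha>^2"
  shows "Inf {r. r > 0 \<and> hdil (1/r) (x,y,z) \<in> B_alpha \<alpha>} \<le> r"
  apply (rule cInf_lower)
  using assms mem_iff[of r \<alpha>] apply auto[1]
  by (rule bdd_belowI[of _ 0]) auto

lemma N_ge: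
  assumes "s > 0" "\<alpha> > 0" "gf (x^2+y^2) (z^2) s > \<alpha>^2"
  shows "Inf {r. r > 0 \<and> hdil (1/r) (x,y,z) \<in> B_alpha \<alpha>} \<ge> s"
proof (rule cInf_greatest)
  define A where "A = x^2+y^2"
  define Z where "Z = z^2"
  have A0: "A \<ge> 0" "Z \<ge> 0" by (auto simp: A_def Z_def)
  define t where "t = max 1 (sqrt (A+Z)/\<alpha>)"
  have t1: "t \<ge> 1" by (simp add: t_def)
  have "sqrt (A+Z)/\<alpha> \<le> t" by (simp add: t_def)
  hence "\<alpha> * t \<ge> sqrt (A+Z)" using assms(2) by (simp add: divide_le_eq mult.commute)
  hence "(\<alpha> * t)^2 \<ge> (sqrt (A+Z))^2" using A0
    by (intro power_mono) auto
  hence h1: "\<alpha>^2 * t^2 \<ge> A + Z" using A0 by (simp add: power_mult_distrib)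
  have "t^2 \<le> t^4" using t1 by (simp add: power_increasing)
  have "t^2 > 0" using t1 by simp
  have "Z / t^4 \<le> Z / t^2" using A0 \<open>t^2 \<le> t^4\<close> \<open>t^2 > 0\<close> by (intro divide_left_mono) auto
  hence "gf A Z t \<le> (A+Z)/t^2" by (simp add: gf_def add_divide_distrib)
  also have "\<dots> \<le> \<alpha>^2" using h1 \<open>t^2 > 0\<close> by (simp add: divide_le_eq)
  finally have "gf A Z t \<le> \<alpha>^2" .
  then show "{r. r > 0 \<and> hdil (1/r) (x,y,z) \<in> B_alpha \<alpha>} \<noteq> {}"
  proof -
    have "t > 0" using t1 by simp
    hence "t \<in> {r. r > 0 \<and> hdil (1/r) (x,y,z) \<in> B_alpha \<alpha>}"
      using mem_iff[of t \<alpha> x y z] assms(2) \<open>gf A Z t \<le> \<alpha>^2\<close> unfolding A_def Z_def by simp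
    thus ?thesis by blast
  qed
next
  fix r assume "r \<in> {r. r > 0 \<and> hdil (1/r) (x,y,z) \<in> B_alpha \<alpha>}"
  hence r: "r > 0" "gf (x^2+y^2) (z^2) r \<le> \<alpha>^2" using mem_iff[of r \<alpha> x y z] assms(2) by auto
  show "s \<le> r"
  proof (rule ccontr)
    assume "\<not> s \<le> r"
    hence "gf (x^2+y^2) (z^2) s \<le> gf (x^2+y^2) (z^2) r" using r by (intro gf_mono) auto
    thus False using r assms by simp
  qed
qed

lemma key:
  fixes xp yp zp xq yq zq a b \<alpha> :: real
  assumes al: "\<alpha> > 0" and a: "a > 3" and b: "0 < b" "4*b^2 < \<alpha>" "b < 1"
    and p: "zp < -a" "xp^2+yp^2 < b^2" and q: "zq < -a" "xq^2+yq^2 < b^2"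
    and zz: "zq \<le> zp"
  shows "d_alpha \<alpha> (xp,yp,zp) (xq,yq,zq) \<le> r_pt \<alpha> (xq,yq,zq)"
proof -
  define Z where "Z = -zq"
  have Z3: "Z > 3" using a q by (simp add: Z_def)
  define S where "S = (Z-1)/\<alpha>"
  have S0: "S > 0" using Z3 al by (simp add: S_def)
  define s where "s = sqrt S"
  have s0: "s > 0" using S0 by (simp add: s_def)
  have s2: "s^2 = S" using S0 by (simp add: s_def)
  have s4: "s^4 = S^2" using s2 by (metis power2_eq_square power4_eq_xxxx mult.assoc)
  have gfS: "gf A W s = A/S + W/S^2" for A W by (simp add: gf_def s2 s4)
  have lower: "r_pt \<alpha> (xq,yq,zq) \<ge> s"
  proof -
    have "r_pt \<alpha> (xq,yq,zq) = Inf {r. r > 0 \<and> hdil (1/r) (xq,yq,zq) \<in> B_alpha \<alpha>}"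
      by (simp add: r_pt_def d_alpha_def hinv_def hmult_def)
    moreover have "gf (xq^2+yq^2) (zq^2) s > \<alpha>^2"
    proof -
      have "zq^2/S^2 = \<alpha>^2 * (Z^2/(Z-1)^2)" using Z3 al
        by (simp add: S_def Z_def power_divide field_simps)
      also have "\<dots> > \<alpha>^2 * 1"
      proof -
        have "(Z-1)^2 < Z^2" using Z3 by (simp add: power2_eq_square algebra_simps)
        hence "Z^2/(Z-1)^2 > 1" using Z3 by simp
        hence "\<alpha>^2 * 1 < \<alpha>^2 * (Z^2/(Z-1)^2)" using al by (intro mult_strict_left_mono) auto
        thus ?thesis .
      qed
      finally have "zq^2/S^2 > \<alpha>^2" by simp
      moreover have "(xq^2+yq^2)/S \<ge> 0" using S0 by simp
      ultimately show ?thesis by (simp add: gfS)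
    qed
    ultimately show ?thesis using N_ge[OF s0 al] by simp
  qed
  define u where "u = xq - xp"
  define v where "v = yq - yp"
  define c where "c = (yp*xq - xp*yq)/2"
  define w where "w = zq - zp + c"
  have hm: "hmult (hinv (xp,yp,zp)) (xq,yq,zq) = (u,v,w)"
    by (simp add: hmult_def hinv_def u_def v_def w_def c_def)
  have uv: "u^2+v^2 \<le> 4*b^2"
  proof -
    have e1: "2*xq^2 + 2*xp^2 - u^2 = (xq+xp)^2" unfolding u_def by (simp add: power2_eq_square algebra_simps)
    have e2: "2*yq^2 + 2*yp^2 - v^2 = (yq+yp)^2" unfolding v_def by (simp add: power2_eq_square algebra_simps)
    have "u^2 \<le> 2*xq^2 + 2*xp^2" using e1 zero_le_power2[of "xq+xp"] by linarith
    moreover have "v^2 \<le> 2*yq^2 + 2*yp^2" using e2 zero_le_power2[of "yq+yp"] by linarith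
    ultimately show ?thesis using p q by linarith
  qed
  have cs: "(yp*xq - xp*yq)^2 \<le> (xp^2+yp^2)*(xq^2+yq^2)"
  proof -
    have "(xp^2+yp^2)*(xq^2+yq^2) - (yp*xq - xp*yq)^2 = (xp*xq+yp*yq)^2"
      by (simp add: power2_eq_square algebra_simps)
    thus ?thesis using zero_le_power2[of "xp*xq+yp*yq"] by linarith
  qed
  have "(xp^2+yp^2)*(xq^2+yq^2) \<le> b^2 * b^2"
    using p q by (intro mult_mono) auto
  also have "\<dots> \<le> 1" using b by (simp add: power_le_one mult_le_one)
  finally have "(yp*xq - xp*yq)^2 \<le> 1" using cs by linarith
  hence "\<bar>yp*xq - xp*yq\<bar> \<le> 1" by (simp add: abs_square_le_1)
  hence cb: "\<bar>c\<bar> \<le> 1/2" by (simp add: c_def)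
  have "\<bar>w\<bar> \<le> Z - 2" using cb zz p a unfolding w_def Z_def by auto
  hence w2: "w^2 \<le> (Z-2)^2" by (metis abs_ge_zero order_trans power2_abs power_mono)
  have "gf (u^2+v^2) (w^2) s \<le> \<alpha>^2"
  proof -
    have "(u^2+v^2)/S \<le> \<alpha>*\<alpha>/\<alpha>/S"
      using uv b S0 al by (intro divide_right_mono) auto
    also have "\<dots> = \<alpha>^2/(Z-1)" using al Z3 by (simp add: S_def power2_eq_square)
    finally have t1: "(u^2+v^2)/S \<le> \<alpha>^2/(Z-1)" .
    have "w^2/S^2 \<le> (Z-2)^2/S^2" using w2 S0 by (intro divide_right_mono) auto
    also have "\<dots> = \<alpha>^2*(Z-2)^2/(Z-1)^2" using al Z3
      by (simp add: S_def power_divide field_simps)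
    finally have t2: "w^2/S^2 \<le> \<alpha>^2*(Z-2)^2/(Z-1)^2" .
    have "\<alpha>^2/(Z-1) + \<alpha>^2*(Z-2)^2/(Z-1)^2 = \<alpha>^2 * ((Z-1) + (Z-2)^2)/(Z-1)^2"
    proof -
      have nz: "Z - 1 \<noteq> 0" using Z3 by simp
      have "\<alpha>^2/(Z-1) = \<alpha>^2*(Z-1)/(Z-1)^2" using nz by (simp add: power2_eq_square)
      thus ?thesis by (simp add: add_divide_distrib[symmetric] distrib_left)
    qed
    also have "\<dots> \<le> \<alpha>^2"
    proof -
      have "(Z-1) + (Z-2)^2 \<le> (Z-1)^2" using Z3 by (simp add: power2_eq_square algebra_simps)
      hence "\<alpha>^2 * ((Z-1) + (Z-2)^2) \<le> \<alpha>^2 * (Z-1)^2" using al by simp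
      thus ?thesis using Z3 by (simp add: divide_le_eq)
    qed
    finally show ?thesis using t1 t2 by (simp add: gfS)
  qed
  hence "d_alpha \<alpha> (xp,yp,zp) (xq,yq,zq) \<le> s"
    unfolding d_alpha_def hm using N_le[OF s0 al] by simp
  thus ?thesis using lower by simp
qed

theorem lemma2p4:
  fixes \<alpha> :: real
  assumes "\<alpha> > 0" and "is_distance (d_alpha \<alpha>)"
  shows "\<exists>a1 b1. a1 \<ge> 1 \<and> 0 < b1 \<and> b1 < 1 \<and>
     (\<forall>a b p q. a > a1 \<longrightarrow> 0 < b \<longrightarrow> b < b1 \<longrightarrow>
        p \<notin> hball \<alpha> q (r_pt \<alpha> q) \<longrightarrow> q \<notin> hball \<alpha> p (r_pt \<alpha> p) \<longrightarrow>
        \<not> (p \<in> Tset a b \<and> q \<in> Tset a b))"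
proof -
  define b1 where "b1 = min (1/2) (sqrt \<alpha> / 2)"
  have b1: "0 < b1" "b1 < 1" using assms(1) by (auto simp: b1_def)
  have main: "\<not> (p \<in> Tset a b \<and> q \<in> Tset a b)"
    if h: "a > 3" "0 < b" "b < b1" "p \<notin> hball \<alpha> q (r_pt \<alpha> q)" "q \<notin> hball \<alpha> p (r_pt \<alpha> p)"
    for a b p q
  proof
    assume T: "p \<in> Tset a b \<and> q \<in> Tset a b"
    obtain xp yp zp where pe: "p = (xp,yp,zp)" by (cases p) auto
    obtain xq yq zq where qe: "q = (xq,yq,zq)" by (cases q) auto
    have bb: "b < 1" "b < sqrt \<alpha> / 2" using h b1_def by auto
    hence "2*b < sqrt \<alpha>" by simp
    hence "(2*b)^2 < (sqrt \<alpha>)^2" using h by (intro power_strict_mono) auto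
    hence b4: "4*b^2 < \<alpha>" using assms(1) by (simp add: power_mult_distrib)
    have rb: "sqrt s < b \<Longrightarrow> s < b^2" for s
      using h(2) by (metis abs_of_pos real_sqrt_abs real_sqrt_less_iff)
    have pz: "zp < -a" "xp^2+yp^2 < b^2" using T rb by (auto simp: pe Tset_def zc_def rho_def)
    have qz: "zq < -a" "xq^2+yq^2 < b^2" using T rb by (auto simp: qe Tset_def zc_def rho_def)
    show False
    proof (cases "zq \<le> zp")
      case True
      from key[OF assms(1) h(1) h(2) b4 bb(1) pz qz True] h(4) show False
        by (simp add: pe qe hball_def)
    next
      case False
      from key[OF assms(1) h(1) h(2) b4 bb(1) qz pz] False h(5) show False
        by (simp add: pe qe hball_def)
    qed
  qed
  show ?thesis
    apply (rule exI[of _ 3], rule exI[of _ b1])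
    using b1 main by auto
qed

end
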